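(* For $m\ge2$, the class of additive valuations on $[m]$ is pointwise $2(\log_2(m-1)+1)$-approximated by the class of constraint-homogeneous valuations: for every additive valuation $v$ and every nonempty $S\subseteq[m]$ there is a constraint-homogeneous valuation $v'$ with $2(\log_2(m-1)+1)\,v'(S)\ge v(S)$ and $v'(T)\le v(T)$ for all $T\subseteq[m]$.
   Context: A valuation $v$ on $2^{[m]}$ is additive if $v(T)=\sum_{j\in T}v_j$ for nonnegative numbers $v_j$. A valuation is constraint-homogeneous with interest set $S'$ and per-unit value $\hat v\ge0$ if $v(T)=\hat v|T\cap S'|$ for all $T\subseteq[m]$. A class $V$ is pointwise $\beta$-approximated by a class $V'$ if for every $v\in V$ and every $S\subseteq[m]$ there exists $v'\in V'$ (possibly depending on $S$) with $\beta v'(S)\ge v(S)$ and $v(T)\ge v'(T)$ for all $T\subseteq[m]$. *)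

theory Defs
  imports Complex_Main
begin

definition additive_val :: "nat \<Rightarrow> (nat set \<Rightarrow> real) \<Rightarrow> bool" where
  "additive_val m v \<longleftrightarrow> (\<exists>w :: nat \<Rightarrow> real. (\<forall>j\<in>{1..m}. w j \<ge> 0) \<and>
      (\<forall>T. T \<subseteq> {1..m} \<longrightarrow> v T = (\<Sum>j\<in>T. w j)))"

definition constraint_homogeneous :: "nat \<Rightarrow> (nat set \<Rightarrow> real) \<Rightarrow> bool" where
  "constraint_homogeneous m v \<longleftrightarrow> (\<exists>S' vh. S' \<subseteq> {1..m} \<and> vh \<ge> (0::real) \<and>
      (\<forall>T. T \<subseteq> {1..m} \<longrightarrow> v T = vh * real (card (T \<inter> S'))))"

end

theory Submission
  imports Defs
begin

definition HH :: "nat \<Rightarrow> real" where "HH k = (\<Sum>i=1..k. 1 / real i)"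

lemma HH_Suc: "HH (Suc n) = HH n + 1 / real (Suc n)"
  unfolding HH_def by (simp add: sum.cl_ivl_Suc)

lemma HH_mono: "a \<le> b \<Longrightarrow> HH a \<le> HH b"
  unfolding HH_def by (intro sum_mono2) auto

lemma HH_ln_Suc: "HH (Suc k) \<le> 1 + ln (real (Suc k))"
proof (induction k)
  case 0 then show ?case by (simp add: HH_def)
next
  case (Suc n)
  have "ln (real (Suc n) / real (Suc (Suc n))) \<le> real (Suc n) / real (Suc (Suc n)) - 1"
    by (intro ln_le_minus_one) auto
  moreover have "real (Suc n) / real (Suc (Suc n)) - 1 = - (1 / real (Suc (Suc n)))"
    by (simp add: field_simps)
  moreover have "ln (real (Suc n) / real (Suc (Suc n))) = ln (real (Suc n)) - ln (real (Suc (Suc n)))"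
    by (rule ln_divide_pos) auto
  ultimately show ?case using Suc.IH by (simp add: HH_Suc[of "Suc n"])
qed

lemma HH_ln: "n \<ge> 1 \<Longrightarrow> HH n \<le> 1 + ln (real n)"
  using HH_ln_Suc[of "n - 1"] by simp

lemma HH_bound: "m \<ge> 2 \<Longrightarrow> HH m \<le> 2 * (log 2 (real m - 1) + 1)"
proof -
  assume m: "m \<ge> 2"
  have "HH m \<le> 1 + ln (real m)" using m by (intro HH_ln) auto
  also have "ln (real m) \<le> ln (2 * (real m - 1))"
    using m by (subst ln_le_cancel_iff) auto
  also have "\<dots> = ln 2 + ln (real m - 1)" using m by (subst ln_mult) auto
  also have "ln (2::real) \<le> 1" using ln_le_minus_one[of "2::real"] by simp
  finally have a: "HH m \<le> 2 + ln (real m - 1)" by simp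
  have l0: "ln (real m - 1) \<ge> 0" using m by simp
  have l2: "ln (2::real) \<le> 1" using ln_le_minus_one[of "2::real"] by simp
  have l2p: "ln (2::real) > 0" by simp
  have "ln (real m - 1) \<le> ln (real m - 1) / ln 2"
    using l0 l2 l2p by (simp add: le_divide_eq mult_left_le)
  also have "\<dots> = log 2 (real m - 1)" by (simp add: log_def)
  finally show ?thesis using a l0 by (smt (verit) \<open>ln (real m - 1) \<le> ln (real m - 1) / ln 2\<close> divide_nonneg_pos l2p)
qed

lemma key:
  fixes w :: "nat \<Rightarrow> real"
  shows "finite S \<Longrightarrow> (\<forall>j\<in>S. w j \<ge> 0) \<Longrightarrow>
     (\<forall>j\<in>S. w j * real (card {i\<in>S. w j \<le> w i}) \<le> A) \<Longrightarrow> sum w S \<le> A * HH (card S)"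
proof (induction "card S" arbitrary: S)
  case 0 then show ?case by (simp add: HH_def)
next
  case (Suc n S)
  then have ne: "S \<noteq> {}" by auto
  define mu where "mu = Min (w ` S)"
  have "mu \<in> w ` S" unfolding mu_def using Suc.prems ne by (intro Min_in) auto
  then obtain j0 where j0: "j0 \<in> S" "w j0 = mu" by auto
  have jmin: "\<forall>i\<in>S. w j0 \<le> w i" using j0 Suc.prems unfolding mu_def by auto
  have "{i\<in>S. w j0 \<le> w i} = S" using jmin by auto
  then have "w j0 * real (Suc n) \<le> A" using Suc.prems(3) j0 Suc.hyps(2) by force
  then have wj0: "w j0 \<le> A / real (Suc n)" by (simp add: field_simps)
  define S' where "S' = S - {j0}"
  have cS': "n = card S'" unfolding S'_def using Suc.hyps(2) j0 Suc.prems by simp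
  have fS': "finite S'" using Suc.prems unfolding S'_def by simp
  have h3: "\<forall>j\<in>S'. w j * real (card {i\<in>S'. w j \<le> w i}) \<le> A"
  proof
    fix j assume j: "j \<in> S'"
    have "card {i\<in>S'. w j \<le> w i} \<le> card {i\<in>S. w j \<le> w i}"
      using Suc.prems(1) unfolding S'_def by (intro card_mono) auto
    then have "w j * real (card {i\<in>S'. w j \<le> w i}) \<le> w j * real (card {i\<in>S. w j \<le> w i})"
      using Suc.prems(2) j unfolding S'_def by (intro mult_left_mono) auto
    also have "\<dots> \<le> A" using Suc.prems(3) j unfolding S'_def by auto
    finally show "w j * real (card {i\<in>S'. w j \<le> w i}) \<le> A" .
  qed
  have IH: "sum w S' \<le> A * HH n"
    using Suc.hyps(1)[OF cS' fS'] Suc.prems(2) h3 cS' unfolding S'_def by auto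
  have "sum w S = w j0 + sum w S'"
    unfolding S'_def using Suc.prems(1) j0 by (simp add: sum.remove)
  also have "\<dots> \<le> A / real (Suc n) + A * HH n" using wj0 IH by simp
  also have "\<dots> = A * HH (Suc n)" by (simp add: HH_Suc algebra_simps)
  finally show ?case using Suc.hyps(2) by simp
qed

theorem mainTheorem12:
  fixes m :: nat and v :: "nat set \<Rightarrow> real" and S :: "nat set"
  assumes "m \<ge> 2"
    and "additive_val m v"
    and "S \<subseteq> {1..m}" and "S \<noteq> {}"
  shows "\<exists>v'. constraint_homogeneous m v' \<and>
           2 * (log 2 (real m - 1) + 1) * v' S \<ge> v S \<and>
           (\<forall>T. T \<subseteq> {1..m} \<longrightarrow> v' T \<le> v T)"
proof -
  obtain w where w0: "\<forall>j\<in>{1..m}. w j \<ge> 0"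
    and vw: "\<forall>T. T \<subseteq> {1..m} \<longrightarrow> v T = (\<Sum>j\<in>T. w j)"
    using assms(2) unfolding additive_val_def by blast
  have fS: "finite S" using assms(3) finite_subset by blast
  define f where "f j = w j * real (card {i\<in>S. w j \<le> w i})" for j
  define A where "A = Max (f ` S)"
  have "A \<in> f ` S" unfolding A_def using fS assms(4) by (intro Max_in) auto
  then obtain js where js: "js \<in> S" "f js = A" by auto
  have Amax: "\<forall>j\<in>S. f j \<le> A" unfolding A_def using fS by auto
  define t where "t = w js"
  define S' where "S' = {i\<in>S. t \<le> w i}"
  define v' where "v' T = t * real (card (T \<inter> S'))" for T
  have t0: "t \<ge> 0" unfolding t_def using w0 js assms(3) by auto
  have S'sub: "S' \<subseteq> {1..m}" unfolding S'_def using assms(3) by auto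
  have ch: "constraint_homogeneous m v'"
    unfolding constraint_homogeneous_def v'_def using S'sub t0 by blast
  have v'S: "v' S = A" unfolding v'_def using js unfolding f_def t_def S'_def
    by (simp add: Int_absorb1[of "{i \<in> S. w js \<le> w i}" S] Collect_conj_eq Int_commute)
  have sw: "sum w S \<le> A * HH (card S)"
    using key[OF fS, where A=A] w0 assms(3) Amax unfolding f_def by auto
  have A0: "A \<ge> 0" using js w0 assms(3) unfolding f_def by auto
  have "card S \<le> card {1..m}" using assms(3) by (intro card_mono) auto
  then have "HH (card S) \<le> HH m" by (intro HH_mono) simp
  also have "\<dots> \<le> 2 * (log 2 (real m - 1) + 1)" using HH_bound assms(1) by simp
  finally have "A * HH (card S) \<le> A * (2 * (log 2 (real m - 1) + 1))"
    using A0 by (intro mult_left_mono) auto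
  then have b: "2 * (log 2 (real m - 1) + 1) * v' S \<ge> v S"
    using sw vw assms(3) v'S by (simp add: mult.commute)
  have c: "\<forall>T. T \<subseteq> {1..m} \<longrightarrow> v' T \<le> v T"
  proof (intro allI impI)
    fix T assume T: "T \<subseteq> {1..m}"
    have fT: "finite T" using T finite_subset by blast
    have "v' T = (\<Sum>j\<in>T \<inter> S'. t)" unfolding v'_def by simp
    also have "\<dots> \<le> (\<Sum>j\<in>T \<inter> S'. w j)" by (intro sum_mono) (auto simp: S'_def)
    also have "\<dots> \<le> (\<Sum>j\<in>T. w j)" using fT T w0 by (intro sum_mono2) auto
    finally show "v' T \<le> v T" using vw T by simp
  qed
  show ?thesis using ch b c by blast
qed

end
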